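(* For each positive integer $n$, let $P_n=(n, n-1,\ldots,1)$. Then the pair $(P_n,P_n)$ is bigraphic, and every bipartite graph realizing $(P_n,P_n)$ is a mirror bipartite graph; that is, $\mathrm{Bipp}(P_n,P_n)=\mathrm{Mirr}(P_n,P_n)$.
   Context: For sequences $P,Q$ of nonnegative integers, a bipartite graph $G=(V_1\cup V_2,E)$ (with stable sets $V_1,V_2$) realizes $(P,Q)$ if the degrees of the vertices of $V_1$ are the elements of $P$ and the degrees of the vertices of $V_2$ are the elements of $Q$; $(P,Q)$ is bigraphic if such a $G$ exists. A bipartite graph $G=(V_1\cup V_2,E)$ is mirror if there is a bijection $\varphi:V_1\to V_2$ with $u\varphi(v)\in E \iff \varphi(u)v\in E$ for all $u,v\in V_1$. $\mathrm{Bipp}(P,P)$ denotes the set of bipartite graphs (up to isomorphism) realizing $(P,P)$, and $\mathrm{Mirr}(P,P)$ the set of mirror bipartite graphs (up to isomorphism) realizing $(P,P)$. *)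

theory Defs
  imports Main "HOL-Library.Multiset"
begin

definition bipartite_graph :: "'a set \<Rightarrow> 'a set \<Rightarrow> ('a \<times> 'a) set \<Rightarrow> bool" where
  "bipartite_graph V1 V2 E \<longleftrightarrow> finite V1 \<and> finite V2 \<and> V1 \<inter> V2 = {} \<and> E \<subseteq> V1 \<times> V2"

definition deg1 :: "('a \<times> 'a) set \<Rightarrow> 'a \<Rightarrow> nat" where
  "deg1 E u = card {w. (u, w) \<in> E}"

definition deg2 :: "('a \<times> 'a) set \<Rightarrow> 'a \<Rightarrow> nat" where
  "deg2 E w = card {u. (u, w) \<in> E}"

definition realizes :: "'a set \<Rightarrow> 'a set \<Rightarrow> ('a \<times> 'a) set \<Rightarrow> nat list \<Rightarrow> nat list \<Rightarrow> bool" where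
  "realizes V1 V2 E P Q \<longleftrightarrow> bipartite_graph V1 V2 E
     \<and> image_mset (deg1 E) (mset_set V1) = mset P
     \<and> image_mset (deg2 E) (mset_set V2) = mset Q"

definition bigraphic :: "nat list \<Rightarrow> nat list \<Rightarrow> bool" where
  "bigraphic P Q \<longleftrightarrow> (\<exists>(V1::nat set) V2 E. realizes V1 V2 E P Q)"

definition mirror :: "'a set \<Rightarrow> 'a set \<Rightarrow> ('a \<times> 'a) set \<Rightarrow> bool" where
  "mirror V1 V2 E \<longleftrightarrow> (\<exists>\<phi>. bij_betw \<phi> V1 V2 \<and>
      (\<forall>u\<in>V1. \<forall>v\<in>V1. (u, \<phi> v) \<in> E \<longleftrightarrow> (v, \<phi> u) \<in> E))"

definition Pseq :: "nat \<Rightarrow> nat list" where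
  "Pseq n = rev [1..<n+1]"

end

theory Submission
  imports Defs
begin

lemma mset_Pseq: "mset (Pseq n) = mset_set {1..n}"
proof -
  have "mset (Pseq n) = mset_set {1..<n+1}" by (simp only: Pseq_def mset_rev mset_upt)
  moreover have "{1..<n+1} = {1..n}" by auto
  ultimately show ?thesis by simp
qed

lemma bij_from_mset:
  assumes "finite A" "image_mset f (mset_set A) = mset_set {1..(n::nat)}"
  shows "bij_betw f A {1..n}"
proof -
  have "f ` A = {1..n}"
    using arg_cong[OF assms(2), of set_mset] assms(1) by simp
  moreover have "card A = n"
    using arg_cong[OF assms(2), of size] by simp
  ultimately show ?thesis
    using assms(1) by (simp add: bij_betw_def eq_card_imp_inj_on)
qed

lemma key:
  assumes "finite V1" "finite V2" "E \<subseteq> V1 \<times> V2"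
    "bij_betw (deg1 E) V1 {1..n}" "bij_betw (deg2 E) V2 {1..n}"
    "u \<in> V1" "w \<in> V2"
  shows "(u, w) \<in> E \<longleftrightarrow> n + 1 \<le> deg1 E u + deg2 E w"
  using assms
proof (induction n arbitrary: V1 V2 E u w)
  case 0
  then show ?case by (auto simp: bij_betw_def)
next
  case (Suc n)
  note fin1 = Suc.prems(1) and fin2 = Suc.prems(2) and sub = Suc.prems(3)
    and b1 = Suc.prems(4) and b2 = Suc.prems(5)
  obtain x where x: "x \<in> V1" "deg1 E x = Suc n"
  proof -
    have "Suc n \<in> deg1 E ` V1" using b1 by (simp add: bij_betw_def)
    then show ?thesis using that imageE by metis
  qed
  obtain y where y: "y \<in> V2" "deg2 E y = 1"
  proof -
    have "1 \<in> deg2 E ` V2" using b2 by (simp add: bij_betw_def)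
    then show ?thesis using that imageE by metis
  qed
  have cV2: "card V2 = Suc n" using b2 by (simp add: bij_betw_same_card)
  have Nx: "{w. (x, w) \<in> E} = V2"
  proof (rule card_subset_eq[OF fin2])
    show "{w. (x, w) \<in> E} \<subseteq> V2" using sub by auto
    show "card {w. (x, w) \<in> E} = card V2" using x cV2 by (simp add: deg1_def)
  qed
  have xE: "\<And>w. w \<in> V2 \<Longrightarrow> (x, w) \<in> E" using Nx by auto
  have Ny: "{u. (u, y) \<in> E} = {x}"
  proof -
    have "card {u. (u, y) \<in> E} = 1" using y by (simp add: deg2_def)
    then obtain z where "{u. (u, y) \<in> E} = {z}" by (meson card_1_singletonE)
    moreover have "x \<in> {u. (u, y) \<in> E}" using xE y by auto
    ultimately show ?thesis by auto
  qed
  define V1' where "V1' = V1 - {x}"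
  define V2' where "V2' = V2 - {y}"
  define E' where "E' = E \<inter> (V1' \<times> V2')"
  have d1: "deg1 E' v = deg1 E v" if "v \<in> V1'" for v
  proof -
    have "{w. (v, w) \<in> E'} = {w. (v, w) \<in> E}"
      using that sub Ny unfolding E'_def V1'_def V2'_def by auto
    then show ?thesis by (simp add: deg1_def)
  qed
  have d2: "deg2 E' v = deg2 E v - 1" if "v \<in> V2'" for v
  proof -
    have fv: "finite {u. (u, v) \<in> E}"
      by (rule finite_subset[OF _ fin1]) (use sub in auto)
    have "{u. (u, v) \<in> E'} = {u. (u, v) \<in> E} - {x}"
      using that sub unfolding E'_def V1'_def V2'_def by auto
    moreover have "x \<in> {u. (u, v) \<in> E}" using that xE unfolding V2'_def by auto
    ultimately show ?thesis using fv by (simp add: deg2_def)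
  qed
  have b1': "bij_betw (deg1 E') V1' {1..n}"
  proof -
    have "bij_betw (deg1 E) V1' ({1..Suc n} - {Suc n})"
      unfolding V1'_def using b1 x
      using bij_betw_DiffI[OF b1, of "{x}" "{Suc n}"] x b1
      by (simp add: bij_betw_def)
    moreover have "{1..Suc n} - {Suc n} = {1..n}" by auto
    ultimately show ?thesis using bij_betw_cong[of V1' "deg1 E'" "deg1 E"] d1 by simp
  qed
  have b2': "bij_betw (deg2 E') V2' {1..n}"
  proof -
    have bb: "bij_betw (deg2 E) V2' ({1..Suc n} - {1})"
      unfolding V2'_def using b2 y
      using bij_betw_DiffI[OF b2, of "{y}" "{1}"] y b2
      by (simp add: bij_betw_def)
    have "bij_betw (\<lambda>k. k - 1) ({1..Suc n} - {1}) {1..n}"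
    proof (rule bij_betw_byWitness[where f' = Suc])
      show "\<forall>a\<in>{1..Suc n} - {1}. Suc (a - 1) = a" by auto
      show "\<forall>a'\<in>{1..n}. Suc a' - 1 = a'" by auto
      show "(\<lambda>k. k - 1) ` ({1..Suc n} - {1}) \<subseteq> {1..n}" by auto
      show "Suc ` {1..n} \<subseteq> {1..Suc n} - {1}" by auto
    qed
    from bij_betw_trans[OF bb this] have "bij_betw (\<lambda>v. deg2 E v - 1) V2' {1..n}"
      by (simp add: comp_def)
    then show ?thesis using bij_betw_cong[of V2' "deg2 E'" "\<lambda>v. deg2 E v - 1"] d2 by simp
  qed
  have rng1: "deg1 E u \<in> {1..Suc n}" using b1 Suc.prems(6) by (auto simp: bij_betw_def)
  have rng2: "deg2 E w \<in> {1..Suc n}" using b2 Suc.prems(7) by (auto simp: bij_betw_def)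
  show ?case
  proof (cases "u = x")
    case True
    then show ?thesis using xE Suc.prems(7) x rng2 by auto
  next
    case ux: False
    show ?thesis
    proof (cases "w = y")
      case True
      have "deg1 E u \<noteq> Suc n" using ux x b1 Suc.prems(6)
        by (metis bij_betw_def inj_on_contraD)
      then have "(u, y) \<notin> E" "\<not> Suc n + 1 \<le> deg1 E u + deg2 E y"
        using Ny ux rng1 y by auto
      then show ?thesis using True by simp
    next
      case wy: False
      have u': "u \<in> V1'" and w': "w \<in> V2'" using ux wy Suc.prems(6,7) V1'_def V2'_def by auto
      have "deg2 E w \<noteq> 1" using wy y b2 Suc.prems(7)
        by (metis bij_betw_def inj_on_contraD)
      then have "deg2 E w \<ge> 2" using rng2 by auto
      have "(u, w) \<in> E \<longleftrightarrow> (u, w) \<in> E'" using u' w' E'_def by auto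
      also have "\<dots> \<longleftrightarrow> n + 1 \<le> deg1 E' u + deg2 E' w"
        using Suc.IH[of V1' V2' E' u w] fin1 fin2 sub b1' b2' u' w'
        unfolding V1'_def V2'_def E'_def by auto
      also have "\<dots> \<longleftrightarrow> Suc n + 1 \<le> deg1 E u + deg2 E w"
        using d1[OF u'] d2[OF w'] \<open>deg2 E w \<ge> 2\<close> by auto
      finally show ?thesis .
    qed
  qed
qed

theorem lemma3:
  fixes n :: nat and V1 V2 :: "'a set" and E :: "('a \<times> 'a) set"
  assumes "n \<ge> 1"
  shows "bigraphic (Pseq n) (Pseq n) \<and>
         (realizes V1 V2 E (Pseq n) (Pseq n) \<longrightarrow> mirror V1 V2 E)"
proof
  define A :: "nat set" where "A = {1..n}"
  define B :: "nat set" where "B = {n+1..n+n}"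
  define F where "F = {(i, n + j) | i j. i \<in> {1..n} \<and> j \<in> {1..n} \<and> n + 1 \<le> i + j}"
  have dA: "deg1 F i = i" if "i \<in> A" for i
  proof -
    have "{w. (i, w) \<in> F} = (\<lambda>j. n + j) ` {n + 1 - i..n}"
      using that unfolding F_def A_def
      apply (auto simp: image_iff)
      apply (rule_tac x="x - n" in exI)
      by auto
    then show ?thesis using that unfolding deg1_def A_def
      by (simp add: card_image)
  qed
  have dB: "deg2 F (n + j) = j" if "j \<in> {1..n}" for j
  proof -
    have "{u. (u, n + j) \<in> F} = {n + 1 - j..n}"
      using that unfolding F_def by auto
    then show ?thesis using that unfolding deg2_def by simp
  qed
  have "realizes A B F (Pseq n) (Pseq n)"
    unfolding realizes_def bipartite_graph_def mset_Pseq
  proof (intro conjI)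
    show "finite A" "finite B" unfolding A_def B_def by auto
    show "A \<inter> B = {}" unfolding A_def B_def by auto
    show "F \<subseteq> A \<times> B" unfolding A_def B_def F_def by auto
    show "image_mset (deg1 F) (mset_set A) = mset_set {1..n}"
    proof -
      have "image_mset (deg1 F) (mset_set A) = image_mset id (mset_set A)"
        using dA by (intro image_mset_cong) (auto simp: A_def)
      then show ?thesis by (simp add: A_def)
    qed
    have "B = (\<lambda>j. n + j) ` {1..n}" unfolding B_def
      by (simp add: image_add_atLeastAtMost)
    moreover have "inj_on (\<lambda>j. n + j) {1..n}" by (simp add: inj_on_def)
    ultimately have mB: "mset_set B = image_mset (\<lambda>j. n + j) (mset_set {1..n})"
      using image_mset_mset_set[of "\<lambda>j. n + j" "{1..n}"] by simp
    have "image_mset (deg2 F) (mset_set B) = image_mset (\<lambda>j. deg2 F (n + j)) (mset_set {1..n})"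
      unfolding mB by (simp add: multiset.map_comp comp_def)
    also have "\<dots> = image_mset id (mset_set {1..n})"
      using dB by (intro image_mset_cong) auto
    finally show "image_mset (deg2 F) (mset_set B) = mset_set {1..n}" by simp
  qed
  then show "bigraphic (Pseq n) (Pseq n)" unfolding bigraphic_def by blast
next
  show "realizes V1 V2 E (Pseq n) (Pseq n) \<longrightarrow> mirror V1 V2 E"
  proof
    assume r: "realizes V1 V2 E (Pseq n) (Pseq n)"
    then have fin1: "finite V1" and fin2: "finite V2" and sub: "E \<subseteq> V1 \<times> V2"
      by (auto simp: realizes_def bipartite_graph_def)
    have b1: "bij_betw (deg1 E) V1 {1..n}"
      using r fin1 by (intro bij_from_mset) (auto simp: realizes_def mset_Pseq)
    have b2: "bij_betw (deg2 E) V2 {1..n}"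
      using r fin2 by (intro bij_from_mset) (auto simp: realizes_def mset_Pseq)
    define \<phi> where "\<phi> = the_inv_into V2 (deg2 E) \<circ> deg1 E"
    have bphi: "bij_betw \<phi> V1 V2"
      unfolding \<phi>_def using b1 bij_betw_the_inv_into[OF b2] by (rule bij_betw_trans)
    have dphi: "deg2 E (\<phi> v) = deg1 E v" if "v \<in> V1" for v
    proof -
      have "deg1 E v \<in> deg2 E ` V2" using b1 b2 that by (auto simp: bij_betw_def)
      then show ?thesis unfolding \<phi>_def using b2
        by (simp add: bij_betw_def f_the_inv_into_f)
    qed
    show "mirror V1 V2 E" unfolding mirror_def
    proof (intro exI conjI ballI)
      show "bij_betw \<phi> V1 V2" by (rule bphi)
      fix u v assume uv: "u \<in> V1" "v \<in> V1"
      have p1: "\<phi> v \<in> V2" "\<phi> u \<in> V2" using bphi uv bij_betwE by blast+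
      show "(u, \<phi> v) \<in> E \<longleftrightarrow> (v, \<phi> u) \<in> E"
        using key[OF fin1 fin2 sub b1 b2 uv(1) p1(1)] key[OF fin1 fin2 sub b1 b2 uv(2) p1(2)]
          dphi uv by (simp add: add.commute)
    qed
  qed
qed

end
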